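(* The category $\sigma\mathbb{RS}_u$ is isomorphic to the variety $\mathcal{V}_{\sigma\mathbb{RS}_u}$ via the functor $T_u$ that forgets $\bigvee^-$ (interpreting $1$ as the designated weak unit; identity on maps) and the functor $E_u$ that adds $\bigvee^-(g,f_1,f_2,\dots):=\sup_{n\ge1}\{f_n\wedge g\}$ and interprets $1$ as the designated weak unit (identity on maps); these are well defined and mutually inverse. In particular the category of Dedekind $\sigma$-complete Riesz spaces with weak unit is an infinitary variety.
   Context: A weak unit of a Riesz space $G$ is an element $1\ge0$ such that $f\wedge1=0$ implies $f=0$. $\sigma\mathbb{RS}_u$: Dedekind $\sigma$-complete Riesz spaces (every countable bounded-above subset has a supremum) with a designated weak unit, and Riesz morphisms preserving existing countable suprema and the designated unit. $\mathcal{V}_{\sigma\mathbb{RS}_u}$: algebras with the Riesz space operations, a countably infinitary operation $\bigvee^-$ (write $\bigvee_{n\ge1}^g f_n:=\bigvee^-(g,f_1,f_2,\dots)$) and a constant $1$, satisfying the Riesz space axioms, (A1) $\bigvee_{n\ge1}^g f_n=\bigvee_{n\ge1}^g(f_n\wedge g)$; (A2) $\bigvee_{n\ge1}^g f_n=(f_1\wedge g)\vee\bigvee^-(g,f_2,f_3,\dots)$; (A3) $\bigvee_{n\ge1}^g(f_n\wedge h)\le h$ ($a\le b$ meaning $a\wedge b=a$); and $\bigvee_{n\ge1}^{|f|}(|f|\wedge n1)=|f|$. Morphisms preserve all operations. *)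

theory Defs
  imports Complex_Main "HOL-Library.Countable_Set"
begin

text \<open>Riesz-space signature on a carrier type 'a (the whole type is the carrier).\<close>
record 'a rops =
  radd   :: "'a \<Rightarrow> 'a \<Rightarrow> 'a"
  rzero  :: 'a
  rneg   :: "'a \<Rightarrow> 'a"
  rscale :: "real \<Rightarrow> 'a \<Rightarrow> 'a"
  rsup   :: "'a \<Rightarrow> 'a \<Rightarrow> 'a"
  rinf   :: "'a \<Rightarrow> 'a \<Rightarrow> 'a"

definition rle :: "'a rops \<Rightarrow> 'a \<Rightarrow> 'a \<Rightarrow> bool" where
  "rle R a b \<longleftrightarrow> rinf R a b = a"

definition rabs :: "'a rops \<Rightarrow> 'a \<Rightarrow> 'a" where
  "rabs R f = rsup R f (rneg R f)"

definition riesz_space :: "'a rops \<Rightarrow> bool" where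
  "riesz_space R \<longleftrightarrow>
     \<comment> \<open>real vector space\<close>
     (\<forall>x y z. radd R (radd R x y) z = radd R x (radd R y z)) \<and>
     (\<forall>x y. radd R x y = radd R y x) \<and>
     (\<forall>x. radd R (rzero R) x = x) \<and>
     (\<forall>x. radd R (rneg R x) x = rzero R) \<and>
     (\<forall>r x y. rscale R r (radd R x y) = radd R (rscale R r x) (rscale R r y)) \<and>
     (\<forall>r s x. rscale R (r + s) x = radd R (rscale R r x) (rscale R s x)) \<and>
     (\<forall>r s x. rscale R r (rscale R s x) = rscale R (r * s) x) \<and>
     (\<forall>x. rscale R 1 x = x) \<and>
     \<comment> \<open>lattice\<close>
     (\<forall>x y z. rsup R (rsup R x y) z = rsup R x (rsup R y z)) \<and>
     (\<forall>x y z. rinf R (rinf R x y) z = rinf R x (rinf R y z)) \<and>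
     (\<forall>x y. rsup R x y = rsup R y x) \<and>
     (\<forall>x y. rinf R x y = rinf R y x) \<and>
     (\<forall>x y. rsup R x (rinf R x y) = x) \<and>
     (\<forall>x y. rinf R x (rsup R x y) = x) \<and>
     \<comment> \<open>compatibility of the order with the vector space structure\<close>
     (\<forall>x y z. rle R x y \<longrightarrow> rle R (radd R x z) (radd R y z)) \<and>
     (\<forall>r x. 0 \<le> r \<and> rle R (rzero R) x \<longrightarrow> rle R (rzero R) (rscale R r x))"

definition riesz_hom :: "'a rops \<Rightarrow> 'b rops \<Rightarrow> ('a \<Rightarrow> 'b) \<Rightarrow> bool" where
  "riesz_hom R S h \<longleftrightarrow>
     (\<forall>x y. h (radd R x y) = radd S (h x) (h y)) \<and>
     (\<forall>r x. h (rscale R r x) = rscale S r (h x)) \<and>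
     (\<forall>x y. h (rsup R x y) = rsup S (h x) (h y)) \<and>
     (\<forall>x y. h (rinf R x y) = rinf S (h x) (h y))"

definition is_lub :: "'a rops \<Rightarrow> 'a set \<Rightarrow> 'a \<Rightarrow> bool" where
  "is_lub R S s \<longleftrightarrow> (\<forall>x\<in>S. rle R x s) \<and> (\<forall>b. (\<forall>x\<in>S. rle R x b) \<longrightarrow> rle R s b)"

definition rSup :: "'a rops \<Rightarrow> 'a set \<Rightarrow> 'a" where
  "rSup R S = (THE s. is_lub R S s)"

definition sigma_complete :: "'a rops \<Rightarrow> bool" where
  "sigma_complete R \<longleftrightarrow>
     (\<forall>S. countable S \<and> S \<noteq> {} \<and> (\<exists>b. \<forall>x\<in>S. rle R x b) \<longrightarrow> (\<exists>s. is_lub R S s))"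

definition weak_unit :: "'a rops \<Rightarrow> 'a \<Rightarrow> bool" where
  "weak_unit R u \<longleftrightarrow> rle R (rzero R) u \<and> (\<forall>f. rinf R f u = rzero R \<longrightarrow> f = rzero R)"

record 'a srsu =
  sops  :: "'a rops"
  sunit :: 'a

definition srsu_obj :: "'a srsu \<Rightarrow> bool" where
  "srsu_obj A \<longleftrightarrow> riesz_space (sops A) \<and> sigma_complete (sops A) \<and> weak_unit (sops A) (sunit A)"

definition srsu_hom :: "'a srsu \<Rightarrow> 'b srsu \<Rightarrow> ('a \<Rightarrow> 'b) \<Rightarrow> bool" where
  "srsu_hom A B h \<longleftrightarrow>
     riesz_hom (sops A) (sops B) h \<and>
     (\<forall>S s. countable S \<and> S \<noteq> {} \<and> is_lub (sops A) S s \<longrightarrow> is_lub (sops B) (h ` S) (h s)) \<and>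
     h (sunit A) = sunit B"

text \<open>Algebras of the variety V_{sigma RS_u}. The sequence f_1, f_2, ... is indexed by
  nat starting at 0: vsupr g f stands for \<Or>^g_{n\<ge>1} f_n with f_n = f (n-1).\<close>
record 'a valg =
  vops  :: "'a rops"
  vone  :: 'a
  vsupr :: "'a \<Rightarrow> (nat \<Rightarrow> 'a) \<Rightarrow> 'a"

definition valg_obj :: "'a valg \<Rightarrow> bool" where
  "valg_obj V \<longleftrightarrow>
     riesz_space (vops V) \<and>
     (\<forall>g f. vsupr V g f = vsupr V g (\<lambda>n. rinf (vops V) (f n) g)) \<and>
     (\<forall>g f. vsupr V g f = rsup (vops V) (rinf (vops V) (f 0) g) (vsupr V g (\<lambda>n. f (Suc n)))) \<and>
     (\<forall>g f h. rle (vops V) (vsupr V g (\<lambda>n. rinf (vops V) (f n) h)) h) \<and>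
     (\<forall>f. vsupr V (rabs (vops V) f)
            (\<lambda>n. rinf (vops V) (rabs (vops V) f) (rscale (vops V) (real (Suc n)) (vone V)))
          = rabs (vops V) f)"

definition valg_hom :: "'a valg \<Rightarrow> 'b valg \<Rightarrow> ('a \<Rightarrow> 'b) \<Rightarrow> bool" where
  "valg_hom V W h \<longleftrightarrow>
     (\<forall>x y. h (radd (vops V) x y) = radd (vops W) (h x) (h y)) \<and>
     h (rzero (vops V)) = rzero (vops W) \<and>
     (\<forall>x. h (rneg (vops V) x) = rneg (vops W) (h x)) \<and>
     (\<forall>r x. h (rscale (vops V) r x) = rscale (vops W) r (h x)) \<and>
     (\<forall>x y. h (rsup (vops V) x y) = rsup (vops W) (h x) (h y)) \<and>
     (\<forall>x y. h (rinf (vops V) x y) = rinf (vops W) (h x) (h y)) \<and>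
     (\<forall>g f. h (vsupr V g f) = vsupr W (h g) (\<lambda>n. h (f n))) \<and>
     h (vone V) = vone W"

definition T_u :: "'a valg \<Rightarrow> 'a srsu" where
  "T_u V = \<lparr>sops = vops V, sunit = vone V\<rparr>"

definition E_u :: "'a srsu \<Rightarrow> 'a valg" where
  "E_u A = \<lparr>vops = sops A, vone = sunit A,
            vsupr = (\<lambda>g f. rSup (sops A) (range (\<lambda>n. rinf (sops A) (f n) g)))\<rparr>"

end

theory Submission
  imports Defs
begin

locale RS = fixes R :: "'a rops" assumes rs: "riesz_space R"
begin

abbreviation ad (infixl "\<oplus>" 65) where "x \<oplus> y \<equiv> radd R x y"
abbreviation mi (infixl "\<frown>" 70) where "x \<frown> y \<equiv> rinf R x y"
abbreviation ma (infixl "\<smile>" 65) where "x \<smile> y \<equiv> rsup R x y"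
abbreviation le (infix "\<preceq>" 50) where "x \<preceq> y \<equiv> rle R x y"
abbreviation ng where "ng x \<equiv> rneg R x"
abbreviation sc where "sc r x \<equiv> rscale R r x"
abbreviation z0 where "z0 \<equiv> rzero R"

lemma ax1: "radd R (radd R x y) z = radd R x (radd R y z)" using rs[unfolded riesz_space_def] by fast
lemma ax2: "radd R x y = radd R y x" using rs[unfolded riesz_space_def] by fast
lemma ax3: "radd R (rzero R) x = x" using rs[unfolded riesz_space_def] by fast
lemma ax4: "radd R (rneg R x) x = rzero R" using rs[unfolded riesz_space_def] by fast
lemma ax5: "rscale R r (radd R x y) = radd R (rscale R r x) (rscale R r y)" using rs[unfolded riesz_space_def] by fast
lemma ax6: "rscale R (r + s) x = radd R (rscale R r x) (rscale R s x)" using rs[unfolded riesz_space_def] by fast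
lemma ax7: "rscale R r (rscale R s x) = rscale R (r * s) x" using rs[unfolded riesz_space_def] by fast
lemma ax8: "rscale R 1 x = x" using rs[unfolded riesz_space_def] by fast
lemma ax9: "rsup R (rsup R x y) z = rsup R x (rsup R y z)" using rs[unfolded riesz_space_def] by fast
lemma ax10: "rinf R (rinf R x y) z = rinf R x (rinf R y z)" using rs[unfolded riesz_space_def] by fast
lemma ax11: "rsup R x y = rsup R y x" using rs[unfolded riesz_space_def] by fast
lemma ax12: "rinf R x y = rinf R y x" using rs[unfolded riesz_space_def] by fast
lemma ax13: "rsup R x (rinf R x y) = x" using rs[unfolded riesz_space_def] by fast
lemma ax14: "rinf R x (rsup R x y) = x" using rs[unfolded riesz_space_def] by fast
lemmas ax = ax1 ax2 ax3 ax4 ax5 ax6 ax7 ax8 ax9 ax10 ax11 ax12 ax13 ax14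

lemma ax_addle: "x \<preceq> y \<Longrightarrow> x \<oplus> z \<preceq> y \<oplus> z"
  using rs[unfolded riesz_space_def] by fast
lemma ax_scpos: "0 \<le> r \<Longrightarrow> z0 \<preceq> x \<Longrightarrow> z0 \<preceq> sc r x"
  using rs[unfolded riesz_space_def] by fast

lemma add_assoc: "(x \<oplus> y) \<oplus> z = x \<oplus> (y \<oplus> z)" by (rule ax)
lemma add_comm: "x \<oplus> y = y \<oplus> x" by (rule ax)
lemma add_0: "z0 \<oplus> x = x" by (rule ax)
lemma add_0r: "x \<oplus> z0 = x" by (subst add_comm) (rule add_0)
lemma neg_l: "ng x \<oplus> x = z0" by (rule ax)
lemma neg_r: "x \<oplus> ng x = z0" by (subst add_comm) (rule neg_l)
lemma add_lcomm: "x \<oplus> (y \<oplus> z) = y \<oplus> (x \<oplus> z)"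
  by (simp only: add_assoc[symmetric] add_comm[of x y])
lemma add_cancel: assumes "x \<oplus> y = x \<oplus> z" shows "y = z"
proof -
  have "ng x \<oplus> (x \<oplus> y) = ng x \<oplus> (x \<oplus> z)" using assms by simp
  then show ?thesis by (simp only: add_assoc[symmetric] neg_l add_0)
qed
lemma neg_unique: assumes "x \<oplus> y = z0" shows "y = ng x"
proof -
  have "x \<oplus> y = x \<oplus> ng x" using assms by (simp only: neg_r)
  then show ?thesis by (rule add_cancel)
qed
lemma neg_neg: "ng (ng x) = x" using neg_unique[OF neg_l[of x]] by (rule sym)
lemma neg_0: "ng z0 = z0" using neg_unique[OF add_0[of z0]] by (rule sym)
lemma neg_add: "ng (x \<oplus> y) = ng x \<oplus> ng y"
proof -
  have "(x \<oplus> y) \<oplus> (ng x \<oplus> ng y) = z0"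
    by (simp only: add_assoc add_lcomm[of y "ng x"] neg_r add_0r)
  then show ?thesis by (rule neg_unique[THEN sym])
qed
lemma add_minus_cancel: "x \<oplus> (ng x \<oplus> y) = y" by (simp only: add_assoc[symmetric] neg_r add_0)
lemma add_diff_cancel: "(a \<oplus> c) \<oplus> ng c = a" by (simp only: add_assoc neg_r add_0r)
lemma diff_add_cancel: "(a \<oplus> ng c) \<oplus> c = a" by (simp only: add_assoc neg_l add_0r)
lemma sc0: "sc 0 x = z0"
proof -
  have "sc (0+0) x = sc 0 x \<oplus> sc 0 x" by (rule ax)
  then have "sc 0 x \<oplus> z0 = sc 0 x \<oplus> sc 0 x" by (simp add: add_0r)
  then show ?thesis using add_cancel by metis
qed
lemma sc_neg: "sc (-r) x = ng (sc r x)"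
proof -
  have "sc (r + -r) x = sc r x \<oplus> sc (-r) x" by (rule ax)
  then show ?thesis by (simp add: sc0 neg_unique)
qed
lemma sc_m1: "sc (-1) x = ng x" by (simp add: sc_neg ax(8))
lemma sc_z: "sc r z0 = z0"
proof -
  have "sc r z0 = sc r (sc 0 z0)" by (simp only: sc0)
  also have "\<dots> = sc 0 z0" by (simp add: ax(7))
  finally show ?thesis by (simp only: sc0)
qed
lemma sc_negv: "sc r (ng x) = ng (sc r x)"
proof -
  have "sc r x \<oplus> sc r (ng x) = z0" by (simp only: ax(5)[symmetric] neg_r sc_z)
  then show ?thesis by (rule neg_unique)
qed
lemma sc_Suc: "sc (real (Suc k)) x = sc (real k) x \<oplus> x"
proof -
  have "sc (real (Suc k)) x = sc (real k + 1) x" by (simp add: add.commute)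
  also have "\<dots> = sc (real k) x \<oplus> sc 1 x" by (rule ax(6))
  finally show ?thesis by (simp only: ax(8))
qed

lemma inf_idem: "x \<frown> x = x"
proof -
  have "x \<frown> (x \<smile> (x \<frown> x)) = x" by (rule ax(14))
  then show ?thesis by (simp only: ax(13))
qed
lemma sup_idem: "x \<smile> x = x"
proof -
  have "x \<smile> (x \<frown> (x \<smile> x)) = x" by (rule ax(13))
  then show ?thesis by (simp only: ax(14))
qed
lemma le_refl: "x \<preceq> x" by (simp add: rle_def inf_idem)
lemma le_antisym: "x \<preceq> y \<Longrightarrow> y \<preceq> x \<Longrightarrow> x = y"
  unfolding rle_def using ax(12)[of x y] by simp
lemma le_trans: assumes "x \<preceq> y" "y \<preceq> z" shows "x \<preceq> z"
proof -
  have h1: "x \<frown> y = x" and h2: "y \<frown> z = y" using assms by (simp_all add: rle_def)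
  have "x \<frown> z = (x \<frown> y) \<frown> z" using h1 by simp
  also have "\<dots> = x \<frown> (y \<frown> z)" by (rule ax(10))
  also have "\<dots> = x" using h1 h2 by simp
  finally show ?thesis by (simp add: rle_def)
qed
lemma inf_le1: "x \<frown> y \<preceq> x"
proof -
  have "(x \<frown> y) \<frown> x = x \<frown> (y \<frown> x)" by (rule ax(10))
  also have "\<dots> = x \<frown> (x \<frown> y)" by (simp only: ax(12)[of y x])
  also have "\<dots> = (x \<frown> x) \<frown> y" by (rule ax(10)[symmetric])
  also have "\<dots> = x \<frown> y" by (simp only: inf_idem)
  finally show ?thesis by (simp add: rle_def)
qed
lemma inf_le2: "x \<frown> y \<preceq> y"
proof -
  have "(x \<frown> y) \<frown> y = x \<frown> (y \<frown> y)" by (rule ax(10))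
  also have "\<dots> = x \<frown> y" by (simp only: inf_idem)
  finally show ?thesis by (simp add: rle_def)
qed
lemma inf_greatest: assumes "z \<preceq> x" "z \<preceq> y" shows "z \<preceq> x \<frown> y"
proof -
  have h1: "z \<frown> x = z" and h2: "z \<frown> y = z" using assms by (simp_all add: rle_def)
  have "z \<frown> (x \<frown> y) = (z \<frown> x) \<frown> y" by (rule ax(10)[symmetric])
  also have "\<dots> = z" using h1 h2 by simp
  finally show ?thesis by (simp add: rle_def)
qed
lemma le_sup_iff: "x \<preceq> y \<longleftrightarrow> x \<smile> y = y"
proof
  assume "x \<preceq> y"
  then have h: "x \<frown> y = x" by (simp add: rle_def)
  have "x \<smile> y = (y \<frown> x) \<smile> y" using h ax(12)[of x y] by simp
  also have "\<dots> = y \<smile> (y \<frown> x)" by (rule ax(11))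
  also have "\<dots> = y" by (rule ax(13))
  finally show "x \<smile> y = y" .
next
  assume h: "x \<smile> y = y"
  have "x \<frown> (x \<smile> y) = x" by (rule ax(14))
  then show "x \<preceq> y" using h by (simp add: rle_def)
qed
lemma sup_ge1: "x \<preceq> x \<smile> y"
proof -
  have "x \<smile> (x \<smile> y) = (x \<smile> x) \<smile> y" by (rule ax(9)[symmetric])
  also have "\<dots> = x \<smile> y" by (simp only: sup_idem)
  finally show ?thesis by (simp only: le_sup_iff)
qed
lemma sup_ge2: "y \<preceq> x \<smile> y"
proof -
  have "y \<smile> (x \<smile> y) = (x \<smile> y) \<smile> y" by (rule ax(11))
  also have "\<dots> = x \<smile> (y \<smile> y)" by (rule ax(9))
  also have "\<dots> = x \<smile> y" by (simp only: sup_idem)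
  finally show ?thesis by (simp only: le_sup_iff)
qed
lemma sup_least: assumes "x \<preceq> z" "y \<preceq> z" shows "x \<smile> y \<preceq> z"
proof -
  have h1: "x \<smile> z = z" and h2: "y \<smile> z = z" using assms by (simp_all add: le_sup_iff)
  have "(x \<smile> y) \<smile> z = x \<smile> (y \<smile> z)" by (rule ax(9))
  also have "\<dots> = z" using h1 h2 by simp
  finally show ?thesis by (simp only: le_sup_iff)
qed
lemma inf_mono: "a \<preceq> b \<Longrightarrow> c \<preceq> d \<Longrightarrow> a \<frown> c \<preceq> b \<frown> d"
  by (meson inf_greatest inf_le1 inf_le2 le_trans)
lemma sup_mono: "a \<preceq> b \<Longrightarrow> c \<preceq> d \<Longrightarrow> a \<smile> c \<preceq> b \<smile> d"
  by (meson sup_least sup_ge1 sup_ge2 le_trans)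
lemma le_inf_eq: "x \<preceq> y \<Longrightarrow> x \<frown> y = x" by (simp add: rle_def)

lemma add_mono: assumes "a \<preceq> b" "c \<preceq> d" shows "a \<oplus> c \<preceq> b \<oplus> d"
proof -
  have 1: "a \<oplus> c \<preceq> b \<oplus> c" using assms(1) by (rule ax_addle)
  have "c \<oplus> b \<preceq> d \<oplus> b" using assms(2) by (rule ax_addle)
  then have 2: "b \<oplus> c \<preceq> b \<oplus> d" by (simp only: add_comm[of _ b])
  show ?thesis using 1 2 by (rule le_trans)
qed
lemma add_le_cancel: assumes "a \<oplus> c \<preceq> b \<oplus> c" shows "a \<preceq> b"
proof -
  have "(a \<oplus> c) \<oplus> ng c \<preceq> (b \<oplus> c) \<oplus> ng c" using assms by (rule ax_addle)
  then show ?thesis by (simp only: add_diff_cancel)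
qed
lemma neg_mono: assumes "a \<preceq> b" shows "ng b \<preceq> ng a"
proof -
  have "a \<oplus> (ng a \<oplus> ng b) \<preceq> b \<oplus> (ng a \<oplus> ng b)" using assms by (rule ax_addle)
  then show ?thesis by (simp only: add_minus_cancel add_lcomm[of b "ng a"] neg_r add_0r)
qed
lemma le_diff: "a \<preceq> b \<longleftrightarrow> z0 \<preceq> b \<oplus> ng a"
proof
  assume "a \<preceq> b"
  then have "a \<oplus> ng a \<preceq> b \<oplus> ng a" by (rule ax_addle)
  then show "z0 \<preceq> b \<oplus> ng a" by (simp only: neg_r)
next
  assume "z0 \<preceq> b \<oplus> ng a"
  then have "z0 \<oplus> a \<preceq> (b \<oplus> ng a) \<oplus> a" by (rule ax_addle)
  then show "a \<preceq> b" by (simp only: add_0 diff_add_cancel)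
qed
lemma scale_mono: assumes "0 \<le> r" "a \<preceq> b" shows "sc r a \<preceq> sc r b"
proof -
  have "z0 \<preceq> b \<oplus> ng a" using assms(2) le_diff by blast
  then have "z0 \<preceq> sc r (b \<oplus> ng a)" using assms(1) ax_scpos by blast
  then have "z0 \<preceq> sc r b \<oplus> ng (sc r a)" by (simp only: ax(5) sc_negv)
  then show ?thesis using le_diff by blast
qed
lemma scale_mono_r: "r \<le> s \<Longrightarrow> z0 \<preceq> a \<Longrightarrow> sc r a \<preceq> sc s a"
proof -
  assume "r \<le> s" "z0 \<preceq> a"
  then have "z0 \<preceq> sc (s - r) a" by (simp add: ax_scpos)
  then have "z0 \<oplus> sc r a \<preceq> sc (s-r) a \<oplus> sc r a" by (rule ax_addle)
  then show ?thesis by (simp add: ax(6)[symmetric] add_0)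
qed
lemma inf_translate: "(x \<frown> y) \<oplus> z = (x \<oplus> z) \<frown> (y \<oplus> z)"
proof (rule le_antisym)
  show "(x \<frown> y) \<oplus> z \<preceq> (x \<oplus> z) \<frown> (y \<oplus> z)"
    by (simp add: ax_addle inf_greatest inf_le1 inf_le2)
  let ?m = "(x \<oplus> z) \<frown> (y \<oplus> z)"
  have "?m \<oplus> ng z \<preceq> (x \<oplus> z) \<oplus> ng z" by (rule ax_addle[OF inf_le1])
  moreover have "?m \<oplus> ng z \<preceq> (y \<oplus> z) \<oplus> ng z" by (rule ax_addle[OF inf_le2])
  ultimately have "?m \<oplus> ng z \<preceq> x \<frown> y" by (simp only: add_diff_cancel inf_greatest)
  then have "(?m \<oplus> ng z) \<oplus> z \<preceq> (x \<frown> y) \<oplus> z" by (rule ax_addle)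
  then show "?m \<preceq> (x \<frown> y) \<oplus> z" by (simp only: diff_add_cancel)
qed
lemma sup_translate: "(x \<smile> y) \<oplus> z = (x \<oplus> z) \<smile> (y \<oplus> z)"
proof (rule le_antisym)
  show "(x \<oplus> z) \<smile> (y \<oplus> z) \<preceq> (x \<smile> y) \<oplus> z"
    by (simp add: ax_addle sup_least sup_ge1 sup_ge2)
  let ?m = "(x \<oplus> z) \<smile> (y \<oplus> z)"
  have "(x \<oplus> z) \<oplus> ng z \<preceq> ?m \<oplus> ng z" by (rule ax_addle[OF sup_ge1])
  moreover have "(y \<oplus> z) \<oplus> ng z \<preceq> ?m \<oplus> ng z" by (rule ax_addle[OF sup_ge2])
  ultimately have "x \<smile> y \<preceq> ?m \<oplus> ng z" by (simp only: add_diff_cancel sup_least)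
  then have "(x \<smile> y) \<oplus> z \<preceq> (?m \<oplus> ng z) \<oplus> z" by (rule ax_addle)
  then show "(x \<smile> y) \<oplus> z \<preceq> ?m" by (simp only: diff_add_cancel)
qed
lemma neg_inf: "ng (x \<frown> y) = ng x \<smile> ng y"
proof (rule le_antisym)
  show "ng x \<smile> ng y \<preceq> ng (x \<frown> y)" by (simp add: neg_mono sup_least inf_le1 inf_le2)
  let ?s = "ng x \<smile> ng y"
  have "ng ?s \<preceq> ng (ng x)" by (rule neg_mono[OF sup_ge1])
  moreover have "ng ?s \<preceq> ng (ng y)" by (rule neg_mono[OF sup_ge2])
  ultimately have "ng ?s \<preceq> x \<frown> y" by (simp only: neg_neg inf_greatest)
  then have "ng (x \<frown> y) \<preceq> ng (ng ?s)" by (rule neg_mono)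
  then show "ng (x \<frown> y) \<preceq> ?s" by (simp only: neg_neg)
qed
lemma diff_inf: "x \<oplus> ng (x \<frown> y) = (x \<oplus> ng y) \<smile> z0"
proof -
  have "x \<oplus> ng (x \<frown> y) = (ng x \<smile> ng y) \<oplus> x" by (simp only: neg_inf add_comm[of x])
  also have "\<dots> = (ng x \<oplus> x) \<smile> (ng y \<oplus> x)" by (rule sup_translate)
  also have "\<dots> = (x \<oplus> ng y) \<smile> z0" by (simp only: neg_l add_comm[of "ng y" x] ax(11)[of z0])
  finally show ?thesis .
qed

end

context RS begin

lemma add_le_cancel_l: "c \<oplus> a \<preceq> c \<oplus> b \<Longrightarrow> a \<preceq> b"
proof -
  assume "c \<oplus> a \<preceq> c \<oplus> b"
  then have "a \<oplus> c \<preceq> b \<oplus> c" by (simp only: add_comm[of c])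
  then show ?thesis by (rule add_le_cancel)
qed

lemma lub_upper: "is_lub R S s \<Longrightarrow> x \<in> S \<Longrightarrow> x \<preceq> s"
  unfolding is_lub_def by blast
lemma lub_least: "is_lub R S s \<Longrightarrow> (\<And>x. x \<in> S \<Longrightarrow> x \<preceq> b) \<Longrightarrow> s \<preceq> b"
  unfolding is_lub_def by blast

lemma abs_nonneg: "z0 \<preceq> rabs R f"
proof -
  let ?a = "f \<smile> ng f"
  have "f \<oplus> ng f \<preceq> ?a \<oplus> ?a" by (rule add_mono[OF sup_ge1 sup_ge2])
  then have "z0 \<preceq> ?a \<oplus> ?a" by (simp only: neg_r)
  also have "?a \<oplus> ?a = sc 2 ?a"
    using ax6[of 1 1 ?a] by (simp add: ax8)
  finally have "z0 \<preceq> sc 2 ?a" .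
  then have "z0 \<preceq> sc (1/2) (sc 2 ?a)" using ax_scpos[of "1/2" "sc 2 ?a"] by simp
  then show ?thesis by (simp add: ax7 ax8 rabs_def)
qed

lemma nonneg_abs: assumes "z0 \<preceq> f" shows "rabs R f = f"
proof -
  have "ng f \<preceq> z0" using neg_mono[OF assms] by (simp only: neg_0)
  then have "ng f \<preceq> f" using assms by (rule le_trans)
  then have "ng f \<smile> f = f" by (simp only: le_sup_iff)
  then show ?thesis by (simp add: rabs_def ax11[of f])
qed

lemma lub_unique: assumes "is_lub R S s" shows "rSup R S = s"
  unfolding rSup_def
proof (rule the_equality)
  show "is_lub R S s" by fact
  fix t assume t: "is_lub R S t"
  have "t \<preceq> s" using lub_least[OF t lub_upper[OF assms]] .
  moreover have "s \<preceq> t" using lub_least[OF assms lub_upper[OF t]] .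
  ultimately show "t = s" by (rule le_antisym)
qed

lemma sc_lub: assumes "sigma_complete R" "countable S" "S \<noteq> {}" "\<And>x. x \<in> S \<Longrightarrow> x \<preceq> b"
  shows "\<exists>s. is_lub R S s"
proof -
  have "countable S \<and> S \<noteq> {} \<and> (\<exists>b. \<forall>x\<in>S. x \<preceq> b)" using assms(2-4) by blast
  then show ?thesis using assms(1) unfolding sigma_complete_def by blast
qed

lemma cnt_rng: "countable (range (h :: nat \<Rightarrow> 'b))"
  by (rule countable_image) simp

lemma lubE: fixes f :: "nat \<Rightarrow> 'a" assumes "sigma_complete R"
  shows "is_lub R (range (\<lambda>n. f n \<frown> g)) (rSup R (range (\<lambda>n. f n \<frown> g)))"
proof -
  have "\<And>x. x \<in> range (\<lambda>n. f n \<frown> g) \<Longrightarrow> x \<preceq> g" by (auto simp: inf_le2)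
  moreover have "range (\<lambda>n. f n \<frown> g) \<noteq> {}" by simp
  moreover have "countable (range (\<lambda>n. f n \<frown> g))" by (rule cnt_rng)
  ultimately have "\<exists>s. is_lub R (range (\<lambda>n. f n \<frown> g)) s"
    using sc_lub[OF assms] by metis
  then obtain s where "is_lub R (range (\<lambda>n. f n \<frown> g)) s" by blast
  then show ?thesis using lub_unique by simp
qed

lemma arch: assumes "sigma_complete R" "z0 \<preceq> w" "\<And>k. sc (real k) w \<preceq> x"
  shows "w = z0"
proof -
  have "\<exists>s. is_lub R (range (\<lambda>k. sc (real k) w)) s"
    by (rule sc_lub[where b=x, OF assms(1) cnt_rng]) (auto intro: assms(3))
  then obtain s where s: "is_lub R (range (\<lambda>k. sc (real k) w)) s" by blast
  have 1: "sc (real k) w \<preceq> s \<oplus> ng w" for k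
  proof -
    have "sc (real (Suc k)) w \<preceq> s" by (rule lub_upper[OF s], rule rangeI)
    then have "sc (real k) w \<oplus> w \<preceq> s" by (simp only: sc_Suc)
    then have "(sc (real k) w \<oplus> w) \<oplus> ng w \<preceq> s \<oplus> ng w" by (rule ax_addle)
    then show ?thesis by (simp only: add_diff_cancel)
  qed
  have "s \<preceq> s \<oplus> ng w" by (rule lub_least[OF s]) (auto intro: 1)
  then have "s \<oplus> z0 \<preceq> s \<oplus> ng w" by (simp only: add_0r)
  then have "z0 \<preceq> ng w" by (rule add_le_cancel_l)
  then have "ng (ng w) \<preceq> ng z0" by (rule neg_mono)
  then have "w \<preceq> z0" by (simp only: neg_neg neg_0)
  then show ?thesis using assms(2) by (rule le_antisym)
qed

lemma unit_sup:
  assumes sc: "sigma_complete R" and wu: "weak_unit R e" and x0: "z0 \<preceq> x"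
    and ub: "\<And>n. x \<frown> sc (real (Suc n)) e \<preceq> y"
  shows "x \<preceq> y"
proof -
  have e0: "z0 \<preceq> e" using wu unfolding weak_unit_def by blast
  have hk: "x \<frown> sc (real k) e \<preceq> x \<frown> y" for k
  proof -
    have "sc (real k) e \<preceq> sc (real (Suc k)) e" using scale_mono_r[OF _ e0] by simp
    then have "x \<frown> sc (real k) e \<preceq> x \<frown> sc (real (Suc k)) e"
      by (rule inf_mono[OF le_refl])
    then have "x \<frown> sc (real k) e \<preceq> y" using ub by (rule le_trans)
    then show ?thesis by (rule inf_greatest[OF inf_le1])
  qed
  define z where "z = x \<oplus> ng (x \<frown> y)"
  have z0: "z0 \<preceq> z" unfolding z_def by (rule le_diff[THEN iffD1, OF inf_le1])
  have hz: "z \<preceq> x \<oplus> ng (x \<frown> sc (real k) e)" for k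
    unfolding z_def by (rule add_mono[OF le_refl neg_mono[OF hk]])
  define w where "w = z \<frown> e"
  have w0: "z0 \<preceq> w" unfolding w_def by (rule inf_greatest[OF z0 e0])
  have claim: "sc (real k) w \<preceq> x \<frown> sc (real k) e" for k
  proof (induction k)
    case 0
    show ?case by (simp only: of_nat_0 sc0) (rule inf_greatest[OF x0 le_refl])
  next
    case (Suc k)
    let ?a = "x \<frown> sc (real k) e"
    have 1: "sc (real (Suc k)) w \<preceq> ?a \<oplus> w" unfolding sc_Suc by (rule ax_addle[OF Suc])
    have "w \<preceq> x \<oplus> ng ?a" unfolding w_def by (rule le_trans[OF inf_le1 hz])
    then have "?a \<oplus> w \<preceq> ?a \<oplus> (x \<oplus> ng ?a)" by (rule add_mono[OF le_refl])
    then have 2: "?a \<oplus> w \<preceq> x" by (simp only: add_lcomm[of ?a x] neg_r add_0r)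
    have "?a \<oplus> w \<preceq> sc (real k) e \<oplus> e" unfolding w_def by (rule add_mono[OF inf_le2 inf_le2])
    then have 3: "?a \<oplus> w \<preceq> sc (real (Suc k)) e" by (simp only: sc_Suc)
    show ?case by (rule le_trans[OF 1 inf_greatest[OF 2 3]])
  qed
  have "sc (real k) w \<preceq> x" for k by (rule le_trans[OF claim inf_le1])
  then have "w = z0" by (rule arch[OF sc w0])
  then have "z \<frown> e = z0" unfolding w_def .
  then have "z = z0" using wu unfolding weak_unit_def by blast
  then have "x \<oplus> ng (x \<frown> y) = z0" unfolding z_def .
  then have "ng (x \<frown> y) = ng x" by (rule neg_unique)
  then have "ng (ng (x \<frown> y)) = ng (ng x)" by simp
  then have "x \<frown> y = x" by (simp only: neg_neg)
  then show ?thesis by (simp add: rle_def)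
qed

lemma disj_mult: assumes a0: "z0 \<preceq> a" and b0: "z0 \<preceq> b" and ab: "a \<frown> b = z0"
  shows "a \<frown> sc (real k) b = z0"
proof (induction k)
  case 0
  have "z0 \<frown> a = z0" using a0 by (simp add: rle_def)
  then show ?case by (simp only: of_nat_0 sc0 ax12[of a])
next
  case (Suc k)
  let ?t = "a \<frown> (sc (real k) b \<oplus> b)"
  have kb0: "z0 \<preceq> sc (real k) b" using b0 by (simp add: ax_scpos)
  have "z0 \<oplus> z0 \<preceq> sc (real k) b \<oplus> b" by (rule add_mono[OF kb0 b0])
  then have "z0 \<preceq> sc (real k) b \<oplus> b" by (simp only: add_0)
  then have t0: "z0 \<preceq> ?t" by (rule inf_greatest[OF a0])
  have "?t \<oplus> ng b \<preceq> (sc (real k) b \<oplus> b) \<oplus> ng b" by (rule ax_addle[OF inf_le2])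
  then have 1: "?t \<oplus> ng b \<preceq> sc (real k) b" by (simp only: add_diff_cancel)
  have "ng b \<preceq> ng z0" using b0 by (rule neg_mono)
  then have "?t \<oplus> ng b \<preceq> ?t \<oplus> ng z0" by (rule add_mono[OF le_refl])
  then have "?t \<oplus> ng b \<preceq> ?t" by (simp only: neg_0 add_0r)
  then have 2: "?t \<oplus> ng b \<preceq> a" by (rule le_trans[OF _ inf_le1])
  have "(?t \<oplus> ng b) \<smile> z0 \<preceq> a \<frown> sc (real k) b"
    by (rule sup_least[OF inf_greatest[OF 2 1] inf_greatest[OF a0 kb0]])
  then have 3: "?t \<oplus> ng (?t \<frown> b) \<preceq> z0" by (simp only: diff_inf Suc)
  have "?t \<frown> b \<preceq> a \<frown> b" by (rule inf_mono[OF inf_le1 le_refl])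
  then have 4: "?t \<frown> b \<preceq> z0" by (simp only: ab)
  have "(?t \<frown> b) \<oplus> (?t \<oplus> ng (?t \<frown> b)) \<preceq> z0 \<oplus> z0" by (rule add_mono[OF 4 3])
  then have "?t \<preceq> z0" by (simp only: add_lcomm[of "?t \<frown> b" ?t] neg_r add_0r add_0)
  then have "?t = z0" using t0 by (rule le_antisym)
  then show ?case by (simp only: sc_Suc)
qed

lemma pos_neg_disj: "(x \<smile> z0) \<frown> (ng x \<smile> z0) = z0"
proof -
  let ?p = "ng x \<smile> z0"
  have h1: "x \<smile> z0 = x \<oplus> ?p"
  proof -
    have "?p \<oplus> x = (ng x \<oplus> x) \<smile> (z0 \<oplus> x)" by (rule sup_translate)
    then show ?thesis by (simp only: neg_l add_0 add_comm[of ?p] ax11[of z0])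
  qed
  have h2: "x \<frown> z0 = ng ?p"
  proof -
    have "ng (x \<frown> z0) = ?p" by (simp only: neg_inf neg_0)
    then have "ng (ng (x \<frown> z0)) = ng ?p" by simp
    then show ?thesis by (simp only: neg_neg)
  qed
  have "(x \<frown> z0) \<oplus> ?p = (x \<oplus> ?p) \<frown> (z0 \<oplus> ?p)" by (rule inf_translate)
  then show ?thesis by (simp only: h1[symmetric] add_0 h2 neg_l)
qed

end

lemma srsu_RS: "srsu_obj A \<Longrightarrow> RS (sops A)"
  unfolding srsu_obj_def RS_def by fast

lemma E_ops: "vops (E_u A) = sops A" "vone (E_u A) = sunit A"
  "vsupr (E_u A) g f = rSup (sops A) (range (\<lambda>n. rinf (sops A) (f n) g))"
  by (simp_all add: E_u_def)

lemma TE: "T_u (E_u A) = A" by (cases A) (simp add: T_u_def E_u_def)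

lemma V_RS: "valg_obj V \<Longrightarrow> RS (vops V)"
  unfolding valg_obj_def RS_def by fast

lemma vA1: "valg_obj V \<Longrightarrow> vsupr V g f = vsupr V g (\<lambda>n. rinf (vops V) (f n) g)"
  unfolding valg_obj_def by fast
lemma vA2: "valg_obj V \<Longrightarrow> vsupr V g f = rsup (vops V) (rinf (vops V) (f 0) g) (vsupr V g (\<lambda>n. f (Suc n)))"
  unfolding valg_obj_def by fast
lemma vA3: "valg_obj V \<Longrightarrow> rle (vops V) (vsupr V g (\<lambda>n. rinf (vops V) (f n) h)) h"
  unfolding valg_obj_def by fast
lemma vA4: "valg_obj V \<Longrightarrow> vsupr V (rabs (vops V) f)
            (\<lambda>n. rinf (vops V) (rabs (vops V) f) (rscale (vops V) (real (Suc n)) (vone V)))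
          = rabs (vops V) f"
  unfolding valg_obj_def by fast

context RS begin

lemma E_obj_R: assumes "srsu_obj A" and AR: "sops A = R" shows "valg_obj (E_u A)"
proof -
  have rs: "riesz_space R" and sc: "sigma_complete R"
    and wu: "weak_unit R (sunit A)" using assms unfolding srsu_obj_def AR by fast+
  show ?thesis unfolding valg_obj_def E_ops AR
  proof (intro conjI allI)
    show "riesz_space R" by (rule rs)
  next
    fix g and f :: "nat \<Rightarrow> 'a"
    show "rSup R (range (\<lambda>n. f n \<frown> g)) = rSup R (range (\<lambda>n. f n \<frown> g \<frown> g))"
      by (simp only: ax10 inf_idem)
  next
    fix g and f :: "nat \<Rightarrow> 'a"
    let ?L = "rSup R (range (\<lambda>n. f (Suc n) \<frown> g))"
    have hL: "is_lub R (range (\<lambda>n. f (Suc n) \<frown> g)) ?L" by (rule lubE[OF sc])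
    have "is_lub R (range (\<lambda>n. f n \<frown> g)) ((f 0 \<frown> g) \<smile> ?L)"
      unfolding is_lub_def
    proof (intro conjI allI impI ballI)
      fix x assume "x \<in> range (\<lambda>n. f n \<frown> g)"
      then obtain n where x: "x = f n \<frown> g" by blast
      show "x \<preceq> (f 0 \<frown> g) \<smile> ?L"
      proof (cases n)
        case 0 then show ?thesis using x sup_ge1 by simp
      next
        case (Suc m)
        have "f (Suc m) \<frown> g \<preceq> ?L" by (rule lub_upper[OF hL]) simp
        then show ?thesis using x Suc le_trans[OF _ sup_ge2] by simp
      qed
    next
      fix b assume b: "\<forall>x\<in>range (\<lambda>n. f n \<frown> g). x \<preceq> b"
      have 1: "f 0 \<frown> g \<preceq> b" using b by simp
      have 2: "?L \<preceq> b" by (rule lub_least[OF hL]) (use b in auto)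
      show "(f 0 \<frown> g) \<smile> ?L \<preceq> b" by (rule sup_least[OF 1 2])
    qed
    then show "rSup R (range (\<lambda>n. f n \<frown> g)) = (f 0 \<frown> g) \<smile> ?L" by (rule lub_unique)
  next
    fix g h and f :: "nat \<Rightarrow> 'a"
    show "rSup R (range (\<lambda>n. f n \<frown> h \<frown> g)) \<preceq> h"
      by (rule lub_least[OF lubE[OF sc]]) (auto intro: le_trans[OF inf_le1 inf_le2])
  next
    fix f
    let ?a = "rabs R f"
    have "is_lub R (range (\<lambda>n. ?a \<frown> sc (real (Suc n)) (sunit A) \<frown> ?a)) ?a"
      unfolding is_lub_def
    proof (intro conjI allI impI ballI)
      fix x assume "x \<in> range (\<lambda>n. ?a \<frown> sc (real (Suc n)) (sunit A) \<frown> ?a)"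
      then show "x \<preceq> ?a" using inf_le2 by auto
    next
      fix b assume b: "\<forall>x\<in>range (\<lambda>n. ?a \<frown> sc (real (Suc n)) (sunit A) \<frown> ?a). x \<preceq> b"
      show "?a \<preceq> b"
      proof (rule unit_sup[OF sc wu abs_nonneg])
        fix n
        have "?a \<frown> sc (real (Suc n)) (sunit A) \<frown> ?a \<preceq> b" using b by simp
        then show "?a \<frown> sc (real (Suc n)) (sunit A) \<preceq> b"
          by (rule le_trans[OF inf_greatest[OF le_refl inf_le1]])
      qed
    qed
    then show "rSup R (range (\<lambda>n. ?a \<frown> sc (real (Suc n)) (sunit A) \<frown> ?a)) = ?a"
      by (rule lub_unique)
  qed
qed

lemma vlub: fixes f :: "nat \<Rightarrow> 'a" assumes V: "valg_obj V" and VR: "vops V = R"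
  shows "is_lub R (range (\<lambda>n. rinf R (f n) g)) (vsupr V g f)"
proof -
  have up: "f n \<frown> g \<preceq> vsupr V g f" for n and f :: "nat \<Rightarrow> 'a"
  proof (induction n arbitrary: f)
    case 0
    show ?case by (subst vA2[OF V, unfolded VR]) (rule sup_ge1)
  next
    case (Suc n)
    have eq: "vsupr V g f = (f 0 \<frown> g) \<smile> vsupr V g (\<lambda>n. f (Suc n))" by (rule vA2[OF V, unfolded VR])
    have "vsupr V g (\<lambda>n. f (Suc n)) \<preceq> vsupr V g f" by (subst eq) (rule sup_ge2)
    then show ?case using Suc.IH[of "\<lambda>n. f (Suc n)"] le_trans by blast
  qed
  show ?thesis unfolding is_lub_def
  proof (intro conjI allI impI ballI)
    fix x assume "x \<in> range (\<lambda>n. f n \<frown> g)"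
    then show "x \<preceq> vsupr V g f" using up by auto
  next
    fix b assume b: "\<forall>x\<in>range (\<lambda>n. f n \<frown> g). x \<preceq> b"
    have "(\<lambda>n. f n \<frown> g) = (\<lambda>n. f n \<frown> g \<frown> b)"
      by (rule ext) (rule le_inf_eq[symmetric], use b in simp)
    then have "vsupr V g f = vsupr V g (\<lambda>n. f n \<frown> g \<frown> b)" by (simp only: vA1[OF V, unfolded VR, of g f])
    also have "\<dots> \<preceq> b" by (rule vA3[OF V, unfolded VR])
    finally show "vsupr V g f \<preceq> b" .
  qed
qed

lemma vone_pos: assumes V: "valg_obj V" and VR: "vops V = R" shows "rle R (rzero R) (vone V)"
proof -
  let ?e = "vone V"
  let ?p = "ng ?e \<smile> z0"
  have p0: "z0 \<preceq> ?p" by (rule sup_ge2)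
  have "vsupr V ?p (\<lambda>n. ?p \<frown> sc (real (Suc n)) ?e) = ?p"
    using vA4[OF V, unfolded VR, of ?p] by (simp only: nonneg_abs[OF p0])
  moreover have "vsupr V ?p (\<lambda>n. ?p \<frown> sc (real (Suc n)) ?e) \<preceq> z0"
  proof (rule lub_least[OF vlub[OF V VR]])
    fix x assume "x \<in> range (\<lambda>n. ?p \<frown> sc (real (Suc n)) ?e \<frown> ?p)"
    then obtain n where x: "x = ?p \<frown> sc (real (Suc n)) ?e \<frown> ?p" by blast
    have d: "?p \<frown> (?e \<smile> z0) = z0" using pos_neg_disj[of ?e] by (simp only: ax12[of ?p])
    have "?p \<frown> sc (real (Suc n)) ?e \<preceq> ?p \<frown> sc (real (Suc n)) (?e \<smile> z0)"
      by (rule inf_mono[OF le_refl scale_mono[OF _ sup_ge1]]) simp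
    also have "\<dots> = z0" by (rule disj_mult[OF p0 sup_ge2 d])
    finally show "x \<preceq> z0" unfolding x by (rule le_trans[OF inf_le1])
  qed
  ultimately have "?p \<preceq> z0" by simp
  then have "?p = z0" using p0 by (rule le_antisym)
  then have "ng ?e \<preceq> z0" using sup_ge1[of "ng ?e" z0] by simp
  then have "ng z0 \<preceq> ng (ng ?e)" by (rule neg_mono)
  then show ?thesis by (simp only: neg_0 neg_neg)
qed

lemma V_weak: assumes V: "valg_obj V" and VR: "vops V = R" shows "weak_unit R (vone V)"
proof -
  let ?e = "vone V"
  have e0: "z0 \<preceq> ?e" by (rule vone_pos[OF V VR])
  have "f = z0" if h: "f \<frown> ?e = z0" for f
  proof -
    have f0: "z0 \<preceq> f" using inf_le1[of f ?e] h by simp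
    have d: "f \<frown> sc (real k) ?e = z0" for k by (rule disj_mult[OF f0 e0 h])
    have "vsupr V f (\<lambda>n. f \<frown> sc (real (Suc n)) ?e) = f"
      using vA4[OF V, unfolded VR, of f] by (simp only: nonneg_abs[OF f0])
    moreover have "vsupr V f (\<lambda>n. f \<frown> sc (real (Suc n)) ?e) \<preceq> z0"
    proof (rule lub_least[OF vlub[OF V VR]])
      fix x assume "x \<in> range (\<lambda>n. f \<frown> sc (real (Suc n)) ?e \<frown> f)"
      then obtain n where x: "x = f \<frown> sc (real (Suc n)) ?e \<frown> f" by blast
      show "x \<preceq> z0" unfolding x d by (rule inf_le1)
    qed
    ultimately have "f \<preceq> z0" by simp
    then show "f = z0" using f0 by (rule le_antisym)
  qed
  then show ?thesis unfolding weak_unit_def using e0 by blast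
qed

lemma V_sc: assumes V: "valg_obj V" and VR: "vops V = R" shows "sigma_complete R"
  unfolding sigma_complete_def
proof (intro allI impI)
  fix S assume "countable S \<and> S \<noteq> {} \<and> (\<exists>b. \<forall>x\<in>S. x \<preceq> b)"
  then obtain b where c: "countable S" and ne: "S \<noteq> {}" and b: "\<forall>x\<in>S. x \<preceq> b" by blast
  let ?e = "from_nat_into S"
  have "(\<lambda>n. ?e n \<frown> b) = ?e"
    by (rule ext) (rule le_inf_eq, use b from_nat_into[OF ne] in blast)
  then have "range (\<lambda>n. ?e n \<frown> b) = range ?e" by (rule arg_cong)
  then have "range (\<lambda>n. ?e n \<frown> b) = S" using range_from_nat_into[OF ne c] by (rule trans)
  then show "\<exists>s. is_lub R S s" using vlub[OF V VR, of ?e b] by metis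
qed

lemma V_vsupr: fixes f :: "nat \<Rightarrow> 'a" assumes V: "valg_obj V" and VR: "vops V = R"
  shows "vsupr V g f = rSup R (range (\<lambda>n. rinf R (f n) g))"
proof -
  show ?thesis by (rule lub_unique[OF vlub[OF V VR], symmetric])
qed

end

lemma E_obj: assumes "srsu_obj A" shows "valg_obj (E_u A)"
  by (rule RS.E_obj_R[OF srsu_RS[OF assms] assms refl])
lemma vlub: assumes "valg_obj V" shows "is_lub (vops V) (range (\<lambda>n. rinf (vops V) ((f::nat\<Rightarrow>'a) n) g)) (vsupr V g f)"
  by (rule RS.vlub[OF V_RS[OF assms] assms refl])
lemma V_weak: assumes "valg_obj V" shows "weak_unit (vops V) (vone V)"
  by (rule RS.V_weak[OF V_RS[OF assms] assms refl])
lemma V_sc: assumes "valg_obj V" shows "sigma_complete (vops V)"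
  by (rule RS.V_sc[OF V_RS[OF assms] assms refl])
lemma V_vsupr: assumes "valg_obj V" shows "vsupr V g (f::nat\<Rightarrow>'a) = rSup (vops V) (range (\<lambda>n. rinf (vops V) (f n) g))"
  by (rule RS.V_vsupr[OF V_RS[OF assms] assms refl])

lemma T_obj: assumes V: "valg_obj V" shows "srsu_obj (T_u V)"
  using V_sc[OF V] V_weak[OF V] V_RS[OF V] unfolding srsu_obj_def T_u_def RS_def by simp

lemma ET: assumes V: "valg_obj V" shows "E_u (T_u V) = V"
proof -
  have "vsupr V = (\<lambda>g f. rSup (vops V) (range (\<lambda>n. rinf (vops V) (f n) g)))"
    by (intro ext) (rule V_vsupr[OF V])
  then show ?thesis by (intro valg.equality) (simp_all add: E_u_def T_u_def)
qed

lemma hom1: assumes A: "srsu_obj A" and B: "srsu_obj B" and h: "srsu_hom A B h"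
  shows "valg_hom (E_u A) (E_u B) h"
proof -
  interpret a: RS "sops A" by (rule srsu_RS[OF A])
  interpret b: RS "sops B" by (rule srsu_RS[OF B])
  have scA: "sigma_complete (sops A)" using A unfolding srsu_obj_def by fast
  have hadd: "\<And>x y. h (radd (sops A) x y) = radd (sops B) (h x) (h y)"
    and hsc: "\<And>r x. h (rscale (sops A) r x) = rscale (sops B) r (h x)"
    and hsup: "\<And>x y. h (rsup (sops A) x y) = rsup (sops B) (h x) (h y)"
    and hinf: "\<And>x y. h (rinf (sops A) x y) = rinf (sops B) (h x) (h y)"
    using h[unfolded srsu_hom_def, THEN conjunct1, unfolded riesz_hom_def] by simp_all
  have hlub: "\<And>S s. countable S \<Longrightarrow> S \<noteq> {} \<Longrightarrow> is_lub (sops A) S s \<Longrightarrow> is_lub (sops B) (h ` S) (h s)"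
    using h[unfolded srsu_hom_def, THEN conjunct2, THEN conjunct1] by blast
  have hu: "h (sunit A) = sunit B"
    using h[unfolded srsu_hom_def, THEN conjunct2, THEN conjunct2] .
  have h0: "h (rzero (sops A)) = rzero (sops B)"
  proof -
    have "radd (sops B) (h (rzero (sops A))) (h (rzero (sops A)))
        = radd (sops B) (h (rzero (sops A))) (rzero (sops B))"
      by (simp only: hadd[symmetric] a.add_0 b.add_0r)
    then show ?thesis by (rule b.add_cancel)
  qed
  have hneg: "h (rneg (sops A) x) = rneg (sops B) (h x)" for x
  proof -
    have "radd (sops B) (h x) (h (rneg (sops A) x)) = rzero (sops B)"
      by (simp only: hadd[symmetric] a.neg_r h0)
    then show ?thesis by (rule b.neg_unique)
  qed
  have hv: "h (rSup (sops A) (range (\<lambda>n. rinf (sops A) (f n) g)))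
      = rSup (sops B) (range (\<lambda>n. rinf (sops B) (h (f n)) (h g)))" for g and f :: "nat \<Rightarrow> 'a"
  proof -
    have L: "is_lub (sops A) (range (\<lambda>n. rinf (sops A) (f n) g)) (rSup (sops A) (range (\<lambda>n. rinf (sops A) (f n) g)))"
      by (rule a.lubE[OF scA])
    have X: "is_lub (sops B) (h ` range (\<lambda>n. rinf (sops A) (f n) g)) (h (rSup (sops A) (range (\<lambda>n. rinf (sops A) (f n) g))))"
      by (rule hlub[OF a.cnt_rng _ L]) simp
    have eq: "h ` range (\<lambda>n. rinf (sops A) (f n) g) = range (\<lambda>n. rinf (sops B) (h (f n)) (h g))"
      by (simp add: image_image hinf)
    show ?thesis using b.lub_unique[OF X[unfolded eq]] by (rule sym)
  qed
  show ?thesis unfolding valg_hom_def E_ops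
    by (intro conjI allI) (simp_all only: hadd h0 hneg hsc hsup hinf hv hu)
qed

lemma hom2: assumes A: "srsu_obj A" and B: "srsu_obj B" and h: "valg_hom (E_u A) (E_u B) h"
  shows "srsu_hom A B h"
proof -
  interpret a: RS "sops A" by (rule srsu_RS[OF A])
  interpret b: RS "sops B" by (rule srsu_RS[OF B])
  have scB: "sigma_complete (sops B)" using B unfolding srsu_obj_def by fast
  have hadd: "\<And>x y. h (radd (sops A) x y) = radd (sops B) (h x) (h y)"
    and hsc: "\<And>r x. h (rscale (sops A) r x) = rscale (sops B) r (h x)"
    and hsup: "\<And>x y. h (rsup (sops A) x y) = rsup (sops B) (h x) (h y)"
    and hinf: "\<And>x y. h (rinf (sops A) x y) = rinf (sops B) (h x) (h y)"
    and hv: "\<And>g (f :: nat \<Rightarrow> 'a). h (rSup (sops A) (range (\<lambda>n. rinf (sops A) (f n) g)))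
      = rSup (sops B) (range (\<lambda>n. rinf (sops B) (h (f n)) (h g)))"
    and hu: "h (sunit A) = sunit B"
    using h unfolding valg_hom_def E_ops by simp_all
  have lub: "is_lub (sops B) (h ` S) (h s)"
    if c: "countable S" and ne: "S \<noteq> {}" and ls: "is_lub (sops A) S s" for S s
  proof -
    let ?e = "from_nat_into S"
    have eS: "?e n \<in> S" for n by (rule from_nat_into[OF ne])
    have ele: "rle (sops A) (?e n) s" for n by (rule a.lub_upper[OF ls eS])
    have rS: "range ?e = S" by (rule range_from_nat_into[OF ne c])
    have "(\<lambda>n. rinf (sops A) (?e n) s) = ?e" by (rule ext) (rule a.le_inf_eq[OF ele])
    then have "range (\<lambda>n. rinf (sops A) (?e n) s) = range ?e" by (rule arg_cong)
    then have r1: "range (\<lambda>n. rinf (sops A) (?e n) s) = S" using rS by (rule trans)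
    have s_eq: "rSup (sops A) (range (\<lambda>n. rinf (sops A) (?e n) s)) = s"
      unfolding r1 by (rule a.lub_unique[OF ls])
    have hs: "h s = rSup (sops B) (range (\<lambda>n. rinf (sops B) (h (?e n)) (h s)))"
      using hv[of ?e s] unfolding s_eq .
    have "(\<lambda>n. rinf (sops B) (h (?e n)) (h s)) = (\<lambda>n. h (?e n))"
    proof (rule ext)
      fix n
      have "rinf (sops B) (h (?e n)) (h s) = h (rinf (sops A) (?e n) s)" by (rule hinf[symmetric])
      also have "\<dots> = h (?e n)" by (simp only: a.le_inf_eq[OF ele])
      finally show "rinf (sops B) (h (?e n)) (h s) = h (?e n)" .
    qed
    then have "range (\<lambda>n. rinf (sops B) (h (?e n)) (h s)) = range (\<lambda>n. h (?e n))" by (rule arg_cong)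
    also have "range (\<lambda>n. h (?e n)) = h ` range ?e" by (simp only: image_image)
    also have "\<dots> = h ` S" using rS by (rule arg_cong)
    finally have r2: "range (\<lambda>n. rinf (sops B) (h (?e n)) (h s)) = h ` S" .
    have "is_lub (sops B) (range (\<lambda>n. rinf (sops B) (h (?e n)) (h s)))
        (rSup (sops B) (range (\<lambda>n. rinf (sops B) (h (?e n)) (h s))))"
      by (rule b.lubE[OF scB])
    then have "is_lub (sops B) (range (\<lambda>n. rinf (sops B) (h (?e n)) (h s))) (h s)"
      by (simp only: hs[symmetric])
    then show ?thesis by (simp only: r2)
  qed
  show ?thesis unfolding srsu_hom_def riesz_hom_def
  proof (intro conjI allI impI)
    fix S s assume "countable S \<and> S \<noteq> {} \<and> is_lub (sops A) S s"
    then show "is_lub (sops B) (h ` S) (h s)" using lub by blast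
  qed (rule hadd hsc hsup hinf hu)+
qed

theorem mainTheorem4:
  shows "(\<forall>A :: 'a srsu. srsu_obj A \<longrightarrow> valg_obj (E_u A) \<and> T_u (E_u A) = A)
       \<and> (\<forall>V :: 'a valg. valg_obj V \<longrightarrow> srsu_obj (T_u V) \<and> E_u (T_u V) = V)
       \<and> (\<forall>(A :: 'a srsu) (B :: 'b srsu) (h :: 'a \<Rightarrow> 'b).
            srsu_obj A \<longrightarrow> srsu_obj B \<longrightarrow> (srsu_hom A B h \<longleftrightarrow> valg_hom (E_u A) (E_u B) h))
       \<and> (\<forall>(V :: 'a valg) (W :: 'b valg) (h :: 'a \<Rightarrow> 'b).
            valg_obj V \<longrightarrow> valg_obj W \<longrightarrow> (valg_hom V W h \<longleftrightarrow> srsu_hom (T_u V) (T_u W) h))"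
proof (intro conjI allI impI)
  fix A :: "'a srsu" assume "srsu_obj A"
  then show "valg_obj (E_u A)" by (rule E_obj)
  show "T_u (E_u A) = A" by (rule TE)
next
  fix V :: "'a valg" assume "valg_obj V"
  then show "srsu_obj (T_u V)" by (rule T_obj)
  show "E_u (T_u V) = V" by (rule ET) fact
next
  fix A :: "'a srsu" and B :: "'b srsu" and h :: "'a \<Rightarrow> 'b"
  assume "srsu_obj A" "srsu_obj B"
  then show "srsu_hom A B h \<longleftrightarrow> valg_hom (E_u A) (E_u B) h"
    using hom1 hom2 by (intro iffI)
next
  fix V :: "'a valg" and W :: "'b valg" and h :: "'a \<Rightarrow> 'b"
  assume V: "valg_obj V" and W: "valg_obj W"
  have "valg_hom V W h \<longleftrightarrow> valg_hom (E_u (T_u V)) (E_u (T_u W)) h"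
    by (simp only: ET[OF V] ET[OF W])
  also have "\<dots> \<longleftrightarrow> srsu_hom (T_u V) (T_u W) h"
    using hom1[OF T_obj[OF V] T_obj[OF W]] hom2[OF T_obj[OF V] T_obj[OF W]] by (intro iffI)
  finally show "valg_hom V W h \<longleftrightarrow> srsu_hom (T_u V) (T_u W) h" .
qed

end
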